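(* Let $f:\mathbb{R}^n\to[-1,1]$ be a $C$-Lipschitz function, $\kappa>0$, and let $g:\mathbb{R}^n\to[-1,1]$ be a $W$-junta with $\mathbf{E}_{x\sim\gamma_n}[|f(x)-g(x)|]\le\kappa$. Then there is a $C$-Lipschitz $W$-junta $f_W:\mathbb{R}^n\to[-1,1]$ with $\mathbf{E}_{x\sim\gamma_n}[|f(x)-f_W(x)|]\le2\kappa$.
   Context: $\gamma_n$ is the standard Gaussian measure; $W$ is a linear subspace of $\mathbb{R}^n$; a function is a $W$-junta if it depends on $x$ only through the orthogonal projection of $x$ onto $W$. Lipschitz is with respect to the Euclidean norm. *)

theory Defs
  imports "HOL-Probability.Probability"
begin

definition std_gaussian :: "('a::euclidean_space) measure" where
  "std_gaussian = density lborel
     (\<lambda>x. ennreal ((2 * pi) powr (- real DIM('a) / 2) * exp (- (norm x)\<^sup>2 / 2)))"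

definition orth_proj :: "('a::euclidean_space) set \<Rightarrow> 'a \<Rightarrow> 'a" where
  "orth_proj W x = (THE p. p \<in> W \<and> (\<forall>w\<in>W. (x - p) \<bullet> w = 0))"

definition is_junta :: "('a::euclidean_space) set \<Rightarrow> ('a \<Rightarrow> 'b) \<Rightarrow> bool" where
  "is_junta W g \<longleftrightarrow> (\<exists>h. \<forall>x. g x = h (orth_proj W x))"

end

theory Submission imports Defs begin

lemma nn_translate:
  fixes F :: "'a::euclidean_space \<Rightarrow> ennreal"
  assumes [measurable]: "F \<in> borel_measurable borel"
  shows "(\<integral>\<^sup>+y. F (y + t) \<partial>lborel) = (\<integral>\<^sup>+y. F y \<partial>lborel)"
proof -
  have "(\<integral>\<^sup>+y. F y \<partial>lborel) = (\<integral>\<^sup>+y. F y \<partial>(distr lborel borel ((+) t)))"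
    by (simp add: lborel_distr_plus)
  also have "\<dots> = (\<integral>\<^sup>+y. F (t + y) \<partial>lborel)"
    by (subst nn_integral_distr) auto
  finally show ?thesis by (simp add: add.commute)
qed

lemma shearB:
  fixes F :: "'a::euclidean_space \<times> 'a \<Rightarrow> ennreal" and L :: "'a \<Rightarrow> 'a"
  assumes [measurable]: "F \<in> borel_measurable (borel \<Otimes>\<^sub>M borel)"
  shows "(\<integral>\<^sup>+x. \<integral>\<^sup>+y. F (x, y + L x) \<partial>lborel \<partial>lborel) = (\<integral>\<^sup>+x. \<integral>\<^sup>+y. F (x, y) \<partial>lborel \<partial>lborel)"
proof (rule nn_integral_cong)
  fix x
  have [measurable]: "(\<lambda>y. F (x, y)) \<in> borel_measurable borel" by measurable
  show "(\<integral>\<^sup>+y. F (x, y + L x) \<partial>lborel) = (\<integral>\<^sup>+y. F (x, y) \<partial>lborel)"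
    by (rule nn_translate[of "\<lambda>y. F (x, y)", simplified]) measurable
qed

lemma shearA:
  fixes F :: "'a::euclidean_space \<times> 'a \<Rightarrow> ennreal" and L :: "'a \<Rightarrow> 'a"
  assumes [measurable]: "F \<in> borel_measurable (borel \<Otimes>\<^sub>M borel)" "L \<in> borel_measurable borel"
  shows "(\<integral>\<^sup>+x. \<integral>\<^sup>+y. F (x + L y, y) \<partial>lborel \<partial>lborel) = (\<integral>\<^sup>+x. \<integral>\<^sup>+y. F (x, y) \<partial>lborel \<partial>lborel)"
proof -
  have m1: "case_prod (\<lambda>x y. F (x + L y, y)) \<in> borel_measurable (lborel \<Otimes>\<^sub>M lborel)"
    by measurable
  have m2: "case_prod (\<lambda>x y. F (x, y)) \<in> borel_measurable (lborel \<Otimes>\<^sub>M lborel)"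
    by measurable
  have "(\<integral>\<^sup>+x. \<integral>\<^sup>+y. F (x + L y, y) \<partial>lborel \<partial>lborel) = (\<integral>\<^sup>+y. \<integral>\<^sup>+x. F (x + L y, y) \<partial>lborel \<partial>lborel)"
    using lborel_pair.Fubini'[OF m1] by simp
  also have "\<dots> = (\<integral>\<^sup>+y. \<integral>\<^sup>+x. F (x, y) \<partial>lborel \<partial>lborel)"
  proof (rule nn_integral_cong)
    fix y
    have [measurable]: "(\<lambda>x. F (x, y)) \<in> borel_measurable borel" by measurable
    show "(\<integral>\<^sup>+x. F (x + L y, y) \<partial>lborel) = (\<integral>\<^sup>+x. F (x, y) \<partial>lborel)"
      by (rule nn_translate[of "\<lambda>x. F (x, y)", simplified]) measurable
  qed
  also have "\<dots> = (\<integral>\<^sup>+x. \<integral>\<^sup>+y. F (x, y) \<partial>lborel \<partial>lborel)"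
    using lborel_pair.Fubini'[OF m2] by simp
  finally show ?thesis .
qed

lemma gauss_prod:
  "(2 * pi) powr (- real DIM('a) / 2) * exp (- (norm (x::'a::euclidean_space))\<^sup>2 / 2)
    = (\<Prod>b\<in>Basis. std_normal_density (x \<bullet> b))"
proof -
  have n: "(norm x)\<^sup>2 = (\<Sum>b\<in>Basis. (x \<bullet> b)\<^sup>2)"
    unfolding power2_norm_eq_inner by (subst euclidean_inner) (simp add: power2_eq_square)
  have "(\<Prod>b\<in>Basis. std_normal_density (x \<bullet> b)) = (\<Prod>b\<in>(Basis::'a set). 1 / sqrt (2*pi)) * (\<Prod>b\<in>Basis. exp (- (x \<bullet> b)\<^sup>2 / 2))"
    by (simp only: std_normal_density_def prod.distrib)
  also have "(\<Prod>b\<in>Basis. exp (- (x \<bullet> b)\<^sup>2 / 2)) = exp (- (norm x)\<^sup>2 / 2)"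
  proof -
    have "(\<Prod>b\<in>Basis. exp (- (x \<bullet> b)\<^sup>2 / 2)) = exp (\<Sum>b\<in>Basis. - (x \<bullet> b)\<^sup>2 / 2)"
      by (rule exp_sum[symmetric]) simp
    also have "(\<Sum>b\<in>Basis. - (x \<bullet> b)\<^sup>2 / 2) = - (norm x)\<^sup>2 / 2"
      unfolding n sum_negf[symmetric] sum_divide_distrib[symmetric] by simp
    finally show ?thesis .
  qed
  also have "(\<Prod>b\<in>(Basis::'a set). 1 / sqrt (2*pi)) = (2 * pi) powr (- real DIM('a) / 2)"
  proof -
    have e: "1 / sqrt (2*pi) = (2*pi) powr (-1/2)"
      by (simp add: powr_half_sqrt[symmetric] powr_minus_divide)
    have "(\<Prod>b\<in>(Basis::'a set). 1 / sqrt (2*pi)) = ((2*pi) powr (-1/2)) ^ DIM('a)"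
      by (simp only: prod_constant e)
    also have "\<dots> = (2*pi) powr (-1/2 * real DIM('a))"
      by (simp add: powr_realpow[symmetric] powr_powr)
    finally show ?thesis by simp
  qed
  finally show ?thesis by simp
qed

lemma gauss_total:
  "(\<integral>\<^sup>+x. ennreal ((2 * pi) powr (- real DIM('a) / 2) * exp (- (norm (x::'a::euclidean_space))\<^sup>2 / 2)) \<partial>lborel) = 1"
  apply (simp only: gauss_prod)
  apply (subst prod_ennreal[symmetric], simp)
  apply (subst nn_integral_lborel_prod[where f="\<lambda>b x. ennreal (std_normal_density x)"])
  apply (auto simp: nn_integral_eq_integral)
  done


locale projW =
  fixes W :: "'a::euclidean_space set" and P :: "'a \<Rightarrow> 'a"
  assumes sub: "subspace W"
    and Pw: "\<And>x. P x \<in> W"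
    and Po: "\<And>x w. w \<in> W \<Longrightarrow> (x - P x) \<bullet> w = 0"
    and Pm: "P \<in> borel_measurable borel"
begin

lemma uniq:
  assumes "p \<in> W" "\<And>w. w \<in> W \<Longrightarrow> (x - p) \<bullet> w = 0"
  shows "P x = p"
proof -
  have d: "P x - p \<in> W" using sub Pw assms(1) by (simp add: subspace_diff)
  have "(P x - p) \<bullet> (P x - p) = (x - p) \<bullet> (P x - p) - (x - P x) \<bullet> (P x - p)"
    by (simp add: inner_diff_left)
  also have "\<dots> = 0" using assms(2)[OF d] Po[OF d] by simp
  finally show ?thesis by simp
qed

lemma P_add: "P (x + y) = P x + P y"
proof (rule uniq)
  show "P x + P y \<in> W" by (simp add: sub Pw subspace_add)
  fix w assume w: "w \<in> W"
  have "x + y - (P x + P y) = (x - P x) + (y - P y)" by simp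
  then show "(x + y - (P x + P y)) \<bullet> w = 0" using Po[OF w, of x] Po[OF w, of y]
    by (simp only: inner_add_left)
qed

lemma P_diff: "P (x - y) = P x - P y"
proof (rule uniq)
  show "P x - P y \<in> W" by (simp add: sub Pw subspace_diff)
  fix w assume w: "w \<in> W"
  have "x - y - (P x - P y) = (x - P x) - (y - P y)" by simp
  then show "(x - y - (P x - P y)) \<bullet> w = 0" using Po[OF w, of x] Po[OF w, of y]
    by (simp only: inner_diff_left)
qed

lemma P_idem: "P (P x) = P x"
  by (rule uniq) (auto simp: Pw)

lemma P_Q: "P (y - P y) = 0"
  by (simp add: P_diff P_idem)

lemma orthPQ: "P x \<bullet> (y - P y) = 0"
  using Po[OF Pw[of x], of y] by (simp add: inner_commute)

lemma norm_split: "(norm x)\<^sup>2 = (norm (P x))\<^sup>2 + (norm (x - P x))\<^sup>2"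
proof -
  have h: "P x \<bullet> x = P x \<bullet> P x" using orthPQ[of x x] by (simp add: inner_diff_right)
  show ?thesis
    unfolding power2_norm_eq_inner using h by (simp add: inner_diff_left inner_diff_right inner_commute)
qed

lemma norm_T:
  "(norm (P x - (y - P y)))\<^sup>2 + (norm ((x - P x) + P y))\<^sup>2 = (norm x)\<^sup>2 + (norm y)\<^sup>2"
proof -
  have a: "(norm (P x - (y - P y)))\<^sup>2 = (norm (P x))\<^sup>2 + (norm (y - P y))\<^sup>2"
    using orthPQ[of x y] by (simp add: power2_norm_eq_inner inner_diff_left inner_diff_right inner_commute)
  have b: "(norm ((x - P x) + P y))\<^sup>2 = (norm (x - P x))\<^sup>2 + (norm (P y))\<^sup>2"
    using orthPQ[of y x] by (simp add: power2_norm_eq_inner inner_add_left inner_add_right inner_commute)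
  show ?thesis using a b norm_split[of x] norm_split[of y] by simp
qed

lemma norm_P_le: "norm (P x) \<le> norm x"
proof -
  have "(norm (P x))\<^sup>2 \<le> (norm x)\<^sup>2"
    using norm_split[of x] zero_le_power2[of "norm (x - P x)"] by linarith
  then show ?thesis by (rule power2_le_imp_le) simp
qed

lemma core:
  fixes H :: "'a \<Rightarrow> ennreal"
  assumes Hm[measurable]: "H \<in> borel_measurable borel"
  shows "(\<integral>\<^sup>+x. \<integral>\<^sup>+y. ennreal (exp (- ((norm x)\<^sup>2 + (norm y)\<^sup>2) / 2)) * H (P x - (y - P y)) \<partial>lborel \<partial>lborel)
       = (\<integral>\<^sup>+x. \<integral>\<^sup>+(y::'a). ennreal (exp (- ((norm x)\<^sup>2 + (norm y)\<^sup>2) / 2)) * H x \<partial>lborel \<partial>lborel)"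
proof -
  note [measurable] = Pm
  define Q where "Q y = y - P y" for y
  have Qm[measurable]: "Q \<in> borel_measurable borel" unfolding Q_def[abs_def] by measurable
  define F :: "'a \<times> 'a \<Rightarrow> ennreal" where
    "F z = ennreal (exp (- ((norm (fst z))\<^sup>2 + (norm (snd z))\<^sup>2) / 2)) * H (fst z)" for z
  have Fm[measurable]: "F \<in> borel_measurable (borel \<Otimes>\<^sub>M borel)"
    unfolding F_def[abs_def] by measurable
  define F1 where "F1 z = F (fst z + (\<lambda>v. - Q v) (snd z), snd z)" for z
  define F2 where "F2 z = F1 (fst z, snd z + Q (fst z))" for z
  have F1m[measurable]: "F1 \<in> borel_measurable (borel \<Otimes>\<^sub>M borel)"
    unfolding F1_def[abs_def] by measurable
  have F2m[measurable]: "F2 \<in> borel_measurable (borel \<Otimes>\<^sub>M borel)"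
    unfolding F2_def[abs_def] by measurable
  have QQ: "Q (a - Q b) = Q a - Q b" "Q (a + b) = Q a + Q b" "Q (Q a) = Q a" "Q (P a) = 0" for a b
    by (auto simp: Q_def P_add P_diff P_idem P_Q)
  have key: "F2 (x + (\<lambda>v. - Q v) y, y) =
      ennreal (exp (- ((norm x)\<^sup>2 + (norm y)\<^sup>2) / 2)) * H (P x - (y - P y))" for x y
  proof -
    have e1: "y + Q (x - Q y) = (x - P x) + P y" by (simp add: QQ) (simp add: Q_def algebra_simps)
    have e2: "x - Q y - Q (y + Q (x - Q y)) = P x - (y - P y)"
      by (simp add: QQ) (simp add: Q_def algebra_simps)
    show ?thesis
      unfolding F2_def F1_def F_def using e1 e2 norm_T[of x y] by simp
  qed
  have "(\<integral>\<^sup>+x. \<integral>\<^sup>+y. ennreal (exp (- ((norm x)\<^sup>2 + (norm y)\<^sup>2) / 2)) * H (P x - (y - P y)) \<partial>lborel \<partial>lborel)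
      = (\<integral>\<^sup>+x. \<integral>\<^sup>+y. F2 (x + (\<lambda>v. - Q v) y, y) \<partial>lborel \<partial>lborel)"
    by (simp only: key)
  also have "\<dots> = (\<integral>\<^sup>+x. \<integral>\<^sup>+y. F2 (x, y) \<partial>lborel \<partial>lborel)"
    by (rule shearA) measurable
  also have "\<dots> = (\<integral>\<^sup>+x. \<integral>\<^sup>+y. F1 (x, y + Q x) \<partial>lborel \<partial>lborel)"
    by (simp add: F2_def)
  also have "\<dots> = (\<integral>\<^sup>+x. \<integral>\<^sup>+y. F1 (x, y) \<partial>lborel \<partial>lborel)"
    by (rule shearB) measurable
  also have "\<dots> = (\<integral>\<^sup>+x. \<integral>\<^sup>+y. F (x + (\<lambda>v. - Q v) y, y) \<partial>lborel \<partial>lborel)"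
    by (simp add: F1_def)
  also have "\<dots> = (\<integral>\<^sup>+x. \<integral>\<^sup>+y. F (x, y) \<partial>lborel \<partial>lborel)"
    by (rule shearA) measurable
  also have "\<dots> = (\<integral>\<^sup>+x. \<integral>\<^sup>+(y::'a). ennreal (exp (- ((norm x)\<^sup>2 + (norm y)\<^sup>2) / 2)) * H x \<partial>lborel \<partial>lborel)"
    by (simp add: F_def)
  finally show ?thesis .
qed

end


lemma (in projW) core2:
  fixes H :: "'a \<Rightarrow> ennreal" and c0 :: real
  assumes Hm[measurable]: "H \<in> borel_measurable borel" and c0: "c0 \<ge> 0"
  defines "G \<equiv> \<lambda>x::'a. c0 * exp (- (norm x)\<^sup>2 / 2)"
  shows "(\<integral>\<^sup>+x. \<integral>\<^sup>+y. ennreal (G x) * ennreal (G y) * H (P x - (y - P y)) \<partial>lborel \<partial>lborel)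
       = (\<integral>\<^sup>+x. \<integral>\<^sup>+y. ennreal (G x) * ennreal (G y) * H x \<partial>lborel \<partial>lborel)"
proof -
  note [measurable] = Pm
  have eq: "ennreal (G x) * ennreal (G y) = ennreal (c0 * c0) * ennreal (exp (- ((norm x)\<^sup>2 + (norm y)\<^sup>2) / 2))" for x y
    using c0 by (simp add: G_def ennreal_mult[symmetric] exp_add[symmetric] add_divide_distrib mult_ac)
  have "(\<integral>\<^sup>+x. \<integral>\<^sup>+y. ennreal (G x) * ennreal (G y) * H (P x - (y - P y)) \<partial>lborel \<partial>lborel)
     = (\<integral>\<^sup>+x. ennreal (c0 * c0) * (\<integral>\<^sup>+y. ennreal (exp (- ((norm x)\<^sup>2 + (norm y)\<^sup>2) / 2)) * H (P x - (y - P y)) \<partial>lborel) \<partial>lborel)"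
    by (simp add: eq mult.assoc nn_integral_cmult)
  also have "\<dots> = ennreal (c0 * c0) * (\<integral>\<^sup>+x. \<integral>\<^sup>+y. ennreal (exp (- ((norm x)\<^sup>2 + (norm y)\<^sup>2) / 2)) * H (P x - (y - P y)) \<partial>lborel \<partial>lborel)"
    by (rule nn_integral_cmult) measurable
  also have "\<dots> = ennreal (c0 * c0) * (\<integral>\<^sup>+x. \<integral>\<^sup>+(y::'a). ennreal (exp (- ((norm x)\<^sup>2 + (norm y)\<^sup>2) / 2)) * H x \<partial>lborel \<partial>lborel)"
    by (simp only: core[OF Hm])
  also have "\<dots> = (\<integral>\<^sup>+x. ennreal (c0 * c0) * (\<integral>\<^sup>+(y::'a). ennreal (exp (- ((norm x)\<^sup>2 + (norm y)\<^sup>2) / 2)) * H x \<partial>lborel) \<partial>lborel)"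
    by (rule nn_integral_cmult[symmetric]) measurable
  also have "\<dots> = (\<integral>\<^sup>+x. \<integral>\<^sup>+y. ennreal (G x) * ennreal (G y) * H x \<partial>lborel \<partial>lborel)"
    by (simp add: eq mult.assoc nn_integral_cmult)
  finally show ?thesis .
qed


lemma meas_sg: "h \<in> borel_measurable borel \<Longrightarrow> h \<in> borel_measurable (std_gaussian :: 'a::euclidean_space measure)"
  by (simp add: std_gaussian_def)

lemma prob_sg: "prob_space (std_gaussian :: 'a::euclidean_space measure)"
proof
  have "emeasure (std_gaussian :: 'a measure) (space std_gaussian) =
    (\<integral>\<^sup>+x. ennreal ((2 * pi) powr (- real DIM('a) / 2) * exp (- (norm (x::'a))\<^sup>2 / 2)) \<partial>lborel)"
    unfolding std_gaussian_def by (simp add: emeasure_density)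
  then show "emeasure (std_gaussian :: 'a measure) (space std_gaussian) = 1"
    using gauss_total by simp
qed

lemma exists_proj:
  fixes W :: "'a::euclidean_space set"
  assumes "subspace W"
  obtains P where "projW W P"
proof -
  obtain B where B: "B \<subseteq> W" "pairwise orthogonal B" "\<And>x. x \<in> B \<Longrightarrow> norm x = 1"
    "independent B" "span B = W"
    using orthonormal_basis_subspace[OF assms] by metis
  have fin: "finite B" using B(4) independent_imp_finite by blast
  define P where "P x = (\<Sum>b\<in>B. (x \<bullet> b) *\<^sub>R b)" for x
  have "projW W P"
  proof
    show "subspace W" by fact
    show "P x \<in> W" for x
      unfolding P_def using B(1) assms
      by (intro subspace_sum subspace_scale) auto
    show "P \<in> borel_measurable borel"
      unfolding P_def[abs_def] by measurable
    fix x w assume w: "w \<in> W"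
    have ob: "(x - P x) \<bullet> b' = 0" if b': "b' \<in> B" for b'
    proof -
      have "P x \<bullet> b' = (\<Sum>b\<in>B. (x \<bullet> b) * (b \<bullet> b'))"
        unfolding P_def by (simp add: inner_sum_left)
      also have "\<dots> = (\<Sum>b\<in>B. if b = b' then x \<bullet> b' else 0)"
      proof (rule sum.cong[OF refl])
        fix b assume b: "b \<in> B"
        show "(x \<bullet> b) * (b \<bullet> b') = (if b = b' then x \<bullet> b' else 0)"
        proof (cases "b = b'")
          case True
          then have "b \<bullet> b' = 1" using B(3)[OF b] by (simp add: norm_eq_1)
          then show ?thesis using True by simp
        next
          case False
          then have "b \<bullet> b' = 0" using B(2) b b' by (simp add: pairwise_def orthogonal_def)
          then show ?thesis using False by simp
        qed
      qed
      also have "\<dots> = x \<bullet> b'" using fin b' by (simp add: sum.delta')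
      finally show ?thesis by (simp add: inner_diff_left)
    qed
    have "orthogonal (x - P x) w"
      by (rule orthogonal_to_span[where S=B]) (use w B(5) ob in \<open>auto simp: orthogonal_def\<close>)
    then show "(x - P x) \<bullet> w = 0" by (simp add: orthogonal_def)
  qed
  then show ?thesis using that by blast
qed


theorem lemmaA4:
  fixes f g :: "'a::euclidean_space \<Rightarrow> real" and W :: "'a set"
    and C \<kappa> :: real
  assumes "subspace W"
    and "C-lipschitz_on UNIV f"
    and "\<forall>x. f x \<in> {-1..1}"
    and "\<kappa> > 0"
    and "\<forall>x. g x \<in> {-1..1}"
    and "is_junta W g"
    and "g \<in> borel_measurable borel"
    and "(\<integral>x. \<bar>f x - g x\<bar> \<partial>std_gaussian) \<le> \<kappa>"
  shows "\<exists>fW :: 'a \<Rightarrow> real. C-lipschitz_on UNIV fW \<and> is_junta W fW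
           \<and> (\<forall>x. fW x \<in> {-1..1})
           \<and> (\<integral>x. \<bar>f x - fW x\<bar> \<partial>std_gaussian) \<le> 2 * \<kappa>"
proof -
  note sub = assms(1) and lip = assms(2) and fb = assms(3) and kpos = assms(4)
    and gb = assms(5) and gj = assms(6) and gm[measurable] = assms(7) and fg = assms(8)
  obtain P where PW: "projW W P" using exists_proj[OF sub] by blast
  interpret projW W P by (rule PW)
  note Pm[measurable]
  have op: "orth_proj W x = P x" for x
    unfolding orth_proj_def
  proof (rule the_equality)
    show "P x \<in> W \<and> (\<forall>w\<in>W. (x - P x) \<bullet> w = 0)" using Pw Po by blast
    show "p = P x" if "p \<in> W \<and> (\<forall>w\<in>W. (x - p) \<bullet> w = 0)" for p
      using uniq[of p x] that by auto
  qed
  have fm[measurable]: "f \<in> borel_measurable borel"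
    by (rule borel_measurable_continuous_onI[OF lipschitz_on_continuous_on[OF lip]])
  obtain hg where hg: "\<And>x. g x = hg (P x)" using gj unfolding is_junta_def op by blast
  have gP: "g (P x) = g x" for x by (simp only: hg P_idem)
  define M where "M = (std_gaussian :: 'a measure)"
  interpret M: prob_space M unfolding M_def by (rule prob_sg)
  define c0 where "c0 = (2 * pi) powr (- real DIM('a) / 2)"
  define G where "G x = c0 * exp (- (norm x)\<^sup>2 / 2)" for x :: 'a
  have c0: "c0 \<ge> 0" unfolding c0_def by simp
  have Gm[measurable]: "G \<in> borel_measurable borel" unfolding G_def[abs_def] by measurable
  have M_eq: "M = density lborel (\<lambda>x. ennreal (G x))"
    unfolding M_def std_gaussian_def G_def c0_def ..
  have Gtot: "(\<integral>\<^sup>+x. ennreal (G x) \<partial>lborel) = 1"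
    unfolding G_def c0_def by (rule gauss_total)
  have mM: "h \<in> borel_measurable M" if "h \<in> borel_measurable borel" for h :: "'a \<Rightarrow> real"
    unfolding M_def using that by (rule meas_sg)
  define Q where "Q y = y - P y" for y
  have Qm[measurable]: "Q \<in> borel_measurable borel" unfolding Q_def[abs_def] by measurable
  define H where "H z = ennreal \<bar>f z - g z\<bar>" for z
  have Hm[measurable]: "H \<in> borel_measurable borel" unfolding H_def[abs_def] by measurable
  define \<Phi> where "\<Phi> y = (\<integral>\<^sup>+x. ennreal \<bar>f (P x - Q y) - g (P x)\<bar> \<partial>M)" for y
  have hH: "ennreal \<bar>f (P x - Q y) - g (P x)\<bar> = H (P x - Q y)" for x y
  proof -
    have "g (P x - Q y) = g (P x)"
      by (simp only: hg P_diff P_idem Q_def P_Q diff_zero diff_self)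
    then show ?thesis by (simp add: H_def)
  qed
  have \<Phi>l: "\<Phi> y = (\<integral>\<^sup>+x. ennreal (G x) * H (P x - Q y) \<partial>lborel)" for y
    unfolding \<Phi>_def M_eq hH by (rule nn_integral_density) measurable
  have \<Phi>m[measurable]: "\<Phi> \<in> borel_measurable borel"
    unfolding \<Phi>l[abs_def] by measurable
  have int\<Phi>: "(\<integral>\<^sup>+y. \<Phi> y \<partial>M) = (\<integral>\<^sup>+x. H x \<partial>M)"
  proof -
    have "(\<integral>\<^sup>+y. \<Phi> y \<partial>M) = (\<integral>\<^sup>+y. ennreal (G y) * \<Phi> y \<partial>lborel)"
      unfolding M_eq by (rule nn_integral_density) measurable
    also have "\<dots> = (\<integral>\<^sup>+y. \<integral>\<^sup>+x. ennreal (G x) * ennreal (G y) * H (P x - Q y) \<partial>lborel \<partial>lborel)"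
      unfolding \<Phi>l by (subst nn_integral_cmult[symmetric]) (measurable, simp add: mult_ac)
    also have "\<dots> = (\<integral>\<^sup>+x. \<integral>\<^sup>+y. ennreal (G x) * ennreal (G y) * H (P x - Q y) \<partial>lborel \<partial>lborel)"
      by (rule lborel_pair.Fubini') measurable
    also have "\<dots> = (\<integral>\<^sup>+x. \<integral>\<^sup>+y. ennreal (G x) * ennreal (G y) * H x \<partial>lborel \<partial>lborel)"
      unfolding Q_def G_def by (rule core2[OF Hm c0])
    also have "\<dots> = (\<integral>\<^sup>+x. ennreal (G x) * H x * (\<integral>\<^sup>+y. ennreal (G y) \<partial>lborel) \<partial>lborel)"
      by (subst nn_integral_cmult[symmetric]) (measurable, simp add: mult_ac)
    also have "\<dots> = (\<integral>\<^sup>+x. ennreal (G x) * H x \<partial>lborel)"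
      by (simp add: Gtot)
    also have "\<dots> = (\<integral>\<^sup>+x. H x \<partial>M)"
      unfolding M_eq by (rule nn_integral_density[symmetric]) measurable
    finally show ?thesis .
  qed
  have fgint: "integrable M (\<lambda>x. \<bar>f x - g x\<bar>)"
  proof (rule M.integrable_const_bound[where B=2])
    show "AE x in M. norm \<bar>f x - g x\<bar> \<le> 2"
    proof (rule AE_I2)
      fix x show "norm \<bar>f x - g x\<bar> \<le> 2" using fb[rule_format, of x] gb[rule_format, of x] by auto
    qed
  qed (auto intro!: mM)
  have HM: "(\<integral>\<^sup>+x. H x \<partial>M) \<le> ennreal \<kappa>"
  proof -
    have "(\<integral>\<^sup>+x. H x \<partial>M) = ennreal (\<integral>x. \<bar>f x - g x\<bar> \<partial>M)"
      unfolding H_def by (rule nn_integral_eq_integral[OF fgint]) simp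
    then show ?thesis using fg unfolding M_def by (simp add: ennreal_leI)
  qed
  obtain c where c: "\<Phi> c \<le> ennreal \<kappa>"
  proof (rule ccontr)
    assume "\<not> thesis"
    then have gt: "ennreal \<kappa> < \<Phi> y" for y using that by (meson not_le)
    have "(\<integral>\<^sup>+y. ennreal \<kappa> \<partial>M) < (\<integral>\<^sup>+y. \<Phi> y \<partial>M)"
    proof (rule nn_integral_less)
      show "\<Phi> \<in> borel_measurable M" unfolding M_def by (simp add: std_gaussian_def)
      show "(\<integral>\<^sup>+y. ennreal \<kappa> \<partial>M) \<noteq> \<infinity>" by (simp add: M.emeasure_space_1)
      show "AE x in M. ennreal \<kappa> \<le> \<Phi> x" using gt by (simp add: less_imp_le)
      show "\<not> (AE x in M. \<Phi> x \<le> ennreal \<kappa>)"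
      proof
        assume "AE x in M. \<Phi> x \<le> ennreal \<kappa>"
        then have "AE x in M. False" by eventually_elim (use gt leD in blast)
        then show False using M.AE_False by simp
      qed
    qed simp
    then show False using int\<Phi> HM by (simp add: M.emeasure_space_1)
  qed
  define fW where "fW x = f (P x - Q c)" for x
  have "C-lipschitz_on UNIV fW"
  proof (rule lipschitz_onI)
    show "0 \<le> C" using lip by (rule lipschitz_on_nonneg)
    fix x y :: 'a
    have "dist (fW x) (fW y) \<le> C * dist (P x - Q c) (P y - Q c)"
      unfolding fW_def by (rule lipschitz_onD[OF lip]) auto
    also have "dist (P x - Q c) (P y - Q c) = norm (P (x - y))"
      by (simp add: dist_norm P_diff)
    also have "C * \<dots> \<le> C * dist x y"
      using norm_P_le[of "x - y"] \<open>0 \<le> C\<close> by (simp add: dist_norm mult_left_mono)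
    finally show "dist (fW x) (fW y) \<le> C * dist x y" .
  qed
  moreover have "is_junta W fW"
    unfolding is_junta_def op fW_def by (rule exI[where x="\<lambda>p. f (p - Q c)"]) simp
  moreover have "\<forall>x. fW x \<in> {-1..1}" using fb unfolding fW_def by blast
  moreover have "(\<integral>x. \<bar>f x - fW x\<bar> \<partial>M) \<le> 2 * \<kappa>"
  proof -
    have fWm[measurable]: "fW \<in> borel_measurable borel" unfolding fW_def[abs_def] by measurable
    have gfint: "integrable M (\<lambda>x. \<bar>g x - fW x\<bar>)"
    proof (rule M.integrable_const_bound[where B=2])
      show "AE x in M. norm \<bar>g x - fW x\<bar> \<le> 2"
      proof (rule AE_I2)
        fix x show "norm \<bar>g x - fW x\<bar> \<le> 2" using fb[rule_format, of "P x - Q c"] gb[rule_format, of x] by (auto simp: fW_def)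
      qed
    qed (auto intro!: mM)
    have ffint: "integrable M (\<lambda>x. \<bar>f x - fW x\<bar>)"
    proof (rule M.integrable_const_bound[where B=2])
      show "AE x in M. norm \<bar>f x - fW x\<bar> \<le> 2"
      proof (rule AE_I2)
        fix x show "norm \<bar>f x - fW x\<bar> \<le> 2" using fb[rule_format, of "P x - Q c"] fb[rule_format, of x] by (auto simp: fW_def)
      qed
    qed (auto intro!: mM)
    have "ennreal (\<integral>x. \<bar>g x - fW x\<bar> \<partial>M) = (\<integral>\<^sup>+x. ennreal \<bar>g x - fW x\<bar> \<partial>M)"
      by (rule nn_integral_eq_integral[OF gfint, symmetric]) simp
    also have "\<dots> = \<Phi> c"
      unfolding \<Phi>_def fW_def
    proof (rule nn_integral_cong)
      fix x
      have "g x = g (P x)" by (rule gP[symmetric])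
      then show "ennreal \<bar>g x - f (P x - Q c)\<bar> = ennreal \<bar>f (P x - Q c) - g (P x)\<bar>"
        by (simp add: abs_minus_commute)
    qed
    finally have "ennreal (\<integral>x. \<bar>g x - fW x\<bar> \<partial>M) \<le> ennreal \<kappa>"
      using c by simp
    then have gfk: "(\<integral>x. \<bar>g x - fW x\<bar> \<partial>M) \<le> \<kappa>"
      by (simp add: ennreal_le_iff[OF less_imp_le[OF kpos]])
    have "(\<integral>x. \<bar>f x - fW x\<bar> \<partial>M) \<le> (\<integral>x. \<bar>f x - g x\<bar> + \<bar>g x - fW x\<bar> \<partial>M)"
      by (rule integral_mono[OF ffint Bochner_Integration.integrable_add[OF fgint gfint]]) auto
    also have "\<dots> = (\<integral>x. \<bar>f x - g x\<bar> \<partial>M) + (\<integral>x. \<bar>g x - fW x\<bar> \<partial>M)"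
      by (rule Bochner_Integration.integral_add[OF fgint gfint])
    finally show ?thesis using fg gfk unfolding M_def by linarith
  qed
  ultimately show ?thesis unfolding M_def by blast
qed

end
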